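(* Let $(A,\circ)$ be a permutative algebra and let $D_1,D_2:A\to A$ be derivations of $(A,\circ)$ with $D_1D_2=D_2D_1$. Define $[x,y]=D_1(x)\circ D_2(y)-D_2(x)\circ D_1(y)$ for $x,y\in A$. Then $(A,[\cdot,\cdot])$ is a Leibniz algebra, and $(A,\circ,[\cdot,\cdot])$ is a dual pre-Poisson algebra.
   Context: Field $\mathbb{F}$ of characteristic $0$. A permutative algebra: $x\circ(y\circ z)=(x\circ y)\circ z=(y\circ x)\circ z$. A derivation is a linear $D$ with $D(x\circ y)=D(x)\circ y+x\circ D(y)$. A Leibniz algebra: $[x,[y,z]]=[[x,y],z]+[y,[x,z]]$. A dual pre-Poisson algebra $(A,\circ,[\cdot,\cdot])$: $(A,\circ)$ permutative, $(A,[\cdot,\cdot])$ Leibniz, and $[x,y\circ z]=[x,y]\circ z+y\circ[x,z]$, $[x\circ y,z]=x\circ[y,z]+y\circ[x,z]$, $[x,y]\circ z=-[y,x]\circ z$. *)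

theory Defs
  imports Complex_Main
begin

definition bilinear_op :: "('f::field \<Rightarrow> 'v::ab_group_add \<Rightarrow> 'v) \<Rightarrow> ('v \<Rightarrow> 'v \<Rightarrow> 'v) \<Rightarrow> bool" where
  "bilinear_op scale m \<longleftrightarrow>
     (\<forall>x. Vector_Spaces.linear scale scale (m x)) \<and>
     (\<forall>y. Vector_Spaces.linear scale scale (\<lambda>x. m x y))"

definition permutative_algebra :: "('f::field \<Rightarrow> 'v::ab_group_add \<Rightarrow> 'v) \<Rightarrow> ('v \<Rightarrow> 'v \<Rightarrow> 'v) \<Rightarrow> bool" where
  "permutative_algebra scale m \<longleftrightarrow>
     vector_space scale \<and> bilinear_op scale m \<and>
     (\<forall>x y z. m x (m y z) = m (m x y) z) \<and>
     (\<forall>x y z. m (m x y) z = m (m y x) z)"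

definition derivation :: "('f::field \<Rightarrow> 'v::ab_group_add \<Rightarrow> 'v) \<Rightarrow> ('v \<Rightarrow> 'v \<Rightarrow> 'v) \<Rightarrow> ('v \<Rightarrow> 'v) \<Rightarrow> bool" where
  "derivation scale m D \<longleftrightarrow>
     Vector_Spaces.linear scale scale D \<and>
     (\<forall>x y. D (m x y) = m (D x) y + m x (D y))"

definition leibniz_algebra :: "('f::field \<Rightarrow> 'v::ab_group_add \<Rightarrow> 'v) \<Rightarrow> ('v \<Rightarrow> 'v \<Rightarrow> 'v) \<Rightarrow> bool" where
  "leibniz_algebra scale b \<longleftrightarrow>
     vector_space scale \<and> bilinear_op scale b \<and>
     (\<forall>x y z. b x (b y z) = b (b x y) z + b y (b x z))"

definition dual_pre_poisson_algebra ::
  "('f::field \<Rightarrow> 'v::ab_group_add \<Rightarrow> 'v) \<Rightarrow> ('v \<Rightarrow> 'v \<Rightarrow> 'v) \<Rightarrow> ('v \<Rightarrow> 'v \<Rightarrow> 'v) \<Rightarrow> bool" where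
  "dual_pre_poisson_algebra scale m b \<longleftrightarrow>
     permutative_algebra scale m \<and> leibniz_algebra scale b \<and>
     (\<forall>x y z. b x (m y z) = m (b x y) z + m y (b x z)) \<and>
     (\<forall>x y z. b (m x y) z = m x (b y z) + m y (b x z)) \<and>
     (\<forall>x y z. m (b x y) z = - m (b y x) z)"

end

theory Submission
  imports Defs
begin

lemma add_to_diff:
  fixes f :: "'v::ab_group_add \<Rightarrow> 'w::ab_group_add"
  assumes "\<And>x y. f (x + y) = f x + f y"
  shows "f (x - y) = f x - f y"
proof -
  have "f (x - y) + f y = f x" using assms[of "x - y" y] by simp
  thus ?thesis by (metis add_diff_cancel)
qed

lemma lin_add: "Vector_Spaces.linear s s f \<Longrightarrow> f (x + y) = f x + f y"
  by (simp add: Vector_Spaces.linear_iff)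
lemma lin_scale: "Vector_Spaces.linear s s f \<Longrightarrow> f (s c x) = s c (f x)"
  by (simp add: Vector_Spaces.linear_iff)
lemma lin_diff: "Vector_Spaces.linear s s (f :: 'v::ab_group_add \<Rightarrow> 'v) \<Longrightarrow> f (x - y) = f x - f y"
  by (rule add_to_diff) (simp add: Vector_Spaces.linear_iff)

theorem proposition2p16:
  fixes scale :: "'f::field_char_0 \<Rightarrow> 'v::ab_group_add \<Rightarrow> 'v"
    and m :: "'v \<Rightarrow> 'v \<Rightarrow> 'v"
    and D1 D2 :: "'v \<Rightarrow> 'v"
  assumes "permutative_algebra scale m"
    and "derivation scale m D1"
    and "derivation scale m D2"
    and "D1 \<circ> D2 = D2 \<circ> D1"
  shows "leibniz_algebra scale (\<lambda>x y. m (D1 x) (D2 y) - m (D2 x) (D1 y))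
       \<and> dual_pre_poisson_algebra scale m (\<lambda>x y. m (D1 x) (D2 y) - m (D2 x) (D1 y))"
proof -
  have vs: "vector_space scale" and bl: "bilinear_op scale m"
    and assoc: "\<And>x y z. m x (m y z) = m (m x y) z"
    and comm: "\<And>x y z. m (m x y) z = m (m y x) z"
    using assms(1) unfolding permutative_algebra_def by auto
  have l1: "\<And>x. Vector_Spaces.linear scale scale (m x)"
    and l2: "\<And>y. Vector_Spaces.linear scale scale (\<lambda>x. m x y)"
    using bl unfolding bilinear_op_def by auto
  have ld1: "Vector_Spaces.linear scale scale D1" and d1: "\<And>x y. D1 (m x y) = m (D1 x) y + m x (D1 y)"
    using assms(2) unfolding derivation_def by auto
  have ld2: "Vector_Spaces.linear scale scale D2" and d2: "\<And>x y. D2 (m x y) = m (D2 x) y + m x (D2 y)"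
    using assms(3) unfolding derivation_def by auto
  have dc: "\<And>x. D2 (D1 x) = D1 (D2 x)" using assms(4) by (metis comp_apply)
  have ma: "\<And>x a b. m x (a + b) = m x a + m x b" "\<And>x a b. m x (a - b) = m x a - m x b"
    "\<And>y a b. m (a + b) y = m a y + m b y" "\<And>y a b. m (a - b) y = m a y - m b y"
    "\<And>x c a. m x (scale c a) = scale c (m x a)" "\<And>y c a. m (scale c a) y = scale c (m a y)"
    using lin_add[OF l1] lin_diff[OF l1] lin_add[OF l2] lin_diff[OF l2] lin_scale[OF l1] lin_scale[OF l2]
    by auto
  have da: "\<And>a b. D1 (a + b) = D1 a + D1 b" "\<And>a b. D1 (a - b) = D1 a - D1 b"
    "\<And>a b. D2 (a + b) = D2 a + D2 b" "\<And>a b. D2 (a - b) = D2 a - D2 b"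
    "\<And>c a. D1 (scale c a) = scale c (D1 a)" "\<And>c a. D2 (scale c a) = scale c (D2 a)"
    using lin_add[OF ld1] lin_diff[OF ld1] lin_add[OF ld2] lin_diff[OF ld2] lin_scale[OF ld1] lin_scale[OF ld2]
    by auto
  have rcomm: "\<And>x y z w. m (m (m x y) z) w = m (m (m x z) y) w"
  proof -
    fix x y z w
    have "m (m (m x y) z) w = m (m z (m x y)) w" by (rule comm)
    also have "\<dots> = m (m (m z x) y) w" by (simp only: assoc)
    also have "\<dots> = m (m (m x z) y) w" by (simp only: comm[of z x])
    finally show "m (m (m x y) z) w = m (m (m x z) y) w" .
  qed
  define b where "b = (\<lambda>x y. m (D1 x) (D2 y) - m (D2 x) (D1 y))"
  have md: "module scale" using vs unfolding vector_space_def module_def by blast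
  have sd: "\<And>c u v. scale c u - scale c v = scale c (u - v)"
    by (rule module.scale_right_diff_distrib[OF md, symmetric])
  have bil: "bilinear_op scale b"
    unfolding bilinear_op_def b_def Vector_Spaces.linear_iff
    using vs by (auto simp: ma da sd algebra_simps)
  have leib: "\<And>x y z. b x (b y z) = b (b x y) z + b y (b x z)"
    unfolding b_def by (simp add: ma da d1 d2 dc assoc comm rcomm algebra_simps)
  have p1: "\<And>x y z. b x (m y z) = m (b x y) z + m y (b x z)"
    unfolding b_def by (simp add: ma da d1 d2 dc assoc comm rcomm algebra_simps)
  have p2: "\<And>x y z. b (m x y) z = m x (b y z) + m y (b x z)"
    unfolding b_def by (simp add: ma da d1 d2 dc assoc comm rcomm algebra_simps)
  have p3: "\<And>x y z. m (b x y) z = - m (b y x) z"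
    unfolding b_def by (simp add: ma da d1 d2 dc assoc comm rcomm algebra_simps)
  have L: "leibniz_algebra scale b" unfolding leibniz_algebra_def using vs bil leib by blast
  show ?thesis unfolding b_def[symmetric] dual_pre_poisson_algebra_def
    using L assms(1) p1 p2 p3 by blast
qed

end
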